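(* Let $T$ be a tree on $n$ vertices and let $u$ be a vertex of maximum degree in $T$. Suppose $u_1,u_2$ are two distinct neighbours of $u$ such that $u_1$ has exactly $d_1$ neighbours other than $u$, all of them pendant vertices, and $u_2$ has exactly $d_2$ neighbours other than $u$, all of them pendant vertices (so $T$ consists of a subtree $T_1$ containing $u$, together with the paths $u u_1$, $uu_2$ and the pendant vertices attached to $u_1$ and $u_2$). Let $w$ be a pendant neighbour of $u_2$ and let $T'=T-u_2w+u_1w$. If $d_1\geq d_2\geq 1$, then $e^{M_2}(T)<e^{M_2}(T')$.
   Context: For a tree $G$ with edge set $E(G)$ and vertex degrees $d_G(v)$, the exponential of the second Zagreb index is $e^{M_2}(G)=\sum_{uv\in E(G)} e^{d_G(u)d_G(v)}$. A pendant vertex is a vertex of degree 1. *)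

theory Defs
  imports Complex_Main
begin

definition simple_graph :: "'a set \<Rightarrow> 'a set set \<Rightarrow> bool" where
  "simple_graph V E \<longleftrightarrow> finite V \<and> (\<forall>e\<in>E. e \<subseteq> V \<and> card e = 2)"

definition adj :: "'a set set \<Rightarrow> 'a \<Rightarrow> 'a \<Rightarrow> bool" where
  "adj E x y \<longleftrightarrow> {x, y} \<in> E"

definition neighbours :: "'a set set \<Rightarrow> 'a \<Rightarrow> 'a set" where
  "neighbours E v = {x. adj E v x}"

definition degree :: "'a set set \<Rightarrow> 'a \<Rightarrow> nat" where
  "degree E v = card {e\<in>E. v \<in> e}"

definition pendant :: "'a set set \<Rightarrow> 'a \<Rightarrow> bool" where
  "pendant E v \<longleftrightarrow> degree E v = 1"

definition is_path :: "'a set \<Rightarrow> 'a set set \<Rightarrow> 'a list \<Rightarrow> bool" where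
  "is_path V E p \<longleftrightarrow> p \<noteq> [] \<and> set p \<subseteq> V \<and> distinct p \<and>
     (\<forall>i. Suc i < length p \<longrightarrow> adj E (p ! i) (p ! Suc i))"

definition connected_graph :: "'a set \<Rightarrow> 'a set set \<Rightarrow> bool" where
  "connected_graph V E \<longleftrightarrow>
     (\<forall>x\<in>V. \<forall>y\<in>V. \<exists>p. is_path V E p \<and> hd p = x \<and> last p = y)"

definition has_cycle :: "'a set \<Rightarrow> 'a set set \<Rightarrow> bool" where
  "has_cycle V E \<longleftrightarrow> (\<exists>p. is_path V E p \<and> length p \<ge> 3 \<and> adj E (last p) (hd p))"

definition is_tree :: "'a set \<Rightarrow> 'a set set \<Rightarrow> bool" where
  "is_tree V E \<longleftrightarrow> simple_graph V E \<and> V \<noteq> {} \<and> connected_graph V E \<and> \<not> has_cycle V E"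

definition exp_M2 :: "'a set set \<Rightarrow> real" where
  "exp_M2 E = (\<Sum>e\<in>E. exp (real (\<Prod>v\<in>e. degree E v)))"

end

theory Submission imports Defs begin

lemma edge_form:
  assumes "card e = 2" "v \<in> e" shows "\<exists>x. x \<noteq> v \<and> e = {v, x}"
  using assms by (auto simp: card_2_iff) 

lemma edges_at:
  assumes "\<forall>e\<in>G. card e = 2"
  shows "{e\<in>G. v\<in>e} = (\<lambda>x. {v,x}) ` neighbours G v"
  using assms edge_form unfolding neighbours_def adj_def by fastforce

lemma not_self_nb:
  assumes "\<forall>e\<in>G. card e = 2" shows "v \<notin> neighbours G v"
  using assms unfolding neighbours_def adj_def by fastforce

lemma inj_nb: "inj_on (\<lambda>x. {v,x}) (neighbours G v - {v})"
  by (auto simp: inj_on_def doubleton_eq_iff)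

lemma deg_card:
  assumes "\<forall>e\<in>G. card e = 2"
  shows "degree G v = card (neighbours G v)"
proof -
  have "degree G v = card ((\<lambda>x. {v,x}) ` neighbours G v)"
    unfolding degree_def using edges_at[OF assms] by simp
  also have "\<dots> = card (neighbours G v)"
    using card_image[OF inj_nb[of v G]] not_self_nb[OF assms, of v] by simp
  finally show ?thesis .
qed

lemma star_sum:
  assumes fin: "finite G" and c2: "\<forall>e\<in>G. card e = 2" and va: "{v,a}\<in>G"
    and pd: "\<forall>x\<in>neighbours G v - {a}. degree G x = 1"
  shows "(\<Sum>e\<in>{e\<in>G. v\<in>e}. exp(real(\<Prod>y\<in>e. degree G y))) =
     exp(real(degree G v * degree G a)) + real(degree G v - 1) * exp(real(degree G v))"
proof -
  have nv: "v \<notin> neighbours G v" using not_self_nb[OF c2] .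
  have aN: "a \<in> neighbours G v" using va unfolding neighbours_def adj_def by simp
  have av: "a \<noteq> v" using aN nv by auto
  have finN: "finite (neighbours G v)"
  proof -
    have "{e\<in>G. v\<in>e} = (\<lambda>x. {v,x}) ` neighbours G v" using edges_at[OF c2] .
    moreover have "finite {e\<in>G. v\<in>e}" using fin by simp
    ultimately have "finite ((\<lambda>x. {v,x}) ` (neighbours G v - {v}))" using nv by simp
    thus ?thesis using finite_image_iff[OF inj_nb[of v G]] nv by simp
  qed
  have "(\<Sum>e\<in>{e\<in>G. v\<in>e}. exp(real(\<Prod>y\<in>e. degree G y)))
      = (\<Sum>x\<in>neighbours G v. exp(real(\<Prod>y\<in>{v,x}. degree G y)))"
    unfolding edges_at[OF c2] using sum.reindex[OF inj_nb[of v G]] nv by simp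
  also have "\<dots> = (\<Sum>x\<in>neighbours G v. exp(real(degree G v * degree G x)))"
  proof (intro sum.cong refl)
    fix x assume "x \<in> neighbours G v"
    hence "x \<noteq> v" using nv by auto
    thus "exp(real(\<Prod>y\<in>{v,x}. degree G y)) = exp(real(degree G v * degree G x))" by simp
  qed
  also have "\<dots> = exp(real(degree G v * degree G a)) + (\<Sum>x\<in>neighbours G v - {a}. exp(real(degree G v * degree G x)))"
    using aN finN by (simp add: sum.remove)
  also have "(\<Sum>x\<in>neighbours G v - {a}. exp(real(degree G v * degree G x))) = (\<Sum>x\<in>neighbours G v - {a}. exp(real(degree G v)))"
    using pd by (intro sum.cong) auto
  also have "\<dots> = real(degree G v - 1) * exp(real(degree G v))"
    using aN finN deg_card[OF c2, of v] by simp
  finally show ?thesis .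
qed

lemma split3:
  assumes "finite G" "\<forall>e\<in>G. \<not>(a\<in>e \<and> b\<in>e)"
  shows "sum g G = sum g {e\<in>G. a\<notin>e \<and> b\<notin>e} + sum g {e\<in>G. a\<in>e} + sum g {e\<in>G. b\<in>e}"
proof -
  have "G = {e\<in>G. a\<notin>e \<and> b\<notin>e} \<union> {e\<in>G. a\<in>e} \<union> {e\<in>G. b\<in>e}" by auto
  hence "sum g G = sum g ({e\<in>G. a\<notin>e \<and> b\<notin>e} \<union> {e\<in>G. a\<in>e} \<union> {e\<in>G. b\<in>e})" by simp
  also have "\<dots> = sum g ({e\<in>G. a\<notin>e \<and> b\<notin>e} \<union> {e\<in>G. a\<in>e}) + sum g {e\<in>G. b\<in>e}"
    using assms by (intro sum.union_disjoint) auto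
  also have "sum g ({e\<in>G. a\<notin>e \<and> b\<notin>e} \<union> {e\<in>G. a\<in>e}) = sum g {e\<in>G. a\<notin>e \<and> b\<notin>e} + sum g {e\<in>G. a\<in>e}"
    using assms by (intro sum.union_disjoint) auto
  finally show ?thesis .
qed

lemma final_ineq:
  fixes D d1 d2 :: nat
  assumes "D \<ge> d1 + 1" "d1 \<ge> d2" "d2 \<ge> 1"
  shows "exp (real ((d1+1)*D)) + real d1 * exp (real (d1+1)) + exp (real ((d2+1)*D)) + real d2 * exp (real (d2+1))
    < exp (real ((d1+2)*D)) + real (d1+1) * exp (real (d1+2)) + exp (real (d2*D)) + real (d2-1) * exp (real d2)"
proof -
  have e2: "exp (1::real) \<ge> 2" using exp_ge_add_one_self[of 1] by simp
  have eD: "exp (real D) \<ge> 2"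
  proof -
    have "real D \<ge> 1" using assms by simp
    thus ?thesis using exp_ge_add_one_self[of "real D"] by linarith
  qed
  have a: "exp (real ((d1+2)*D)) = exp (real D) * exp (real ((d1+1)*D))"
    by (simp add: algebra_simps flip: exp_add)
  have b: "exp (real ((d2+1)*D)) \<le> exp (real ((d1+1)*D))"
    using assms by (simp add: mult_right_mono)
  have c: "exp (real ((d1+2)*D)) \<ge> exp (real ((d1+1)*D)) + exp (real ((d2+1)*D))"
  proof -
    have m: "exp (real D) * exp (real ((d1+1)*D)) \<ge> 2 * exp (real ((d1+1)*D))"
      using eD by (intro mult_right_mono) auto
    show ?thesis unfolding a using m b by linarith
  qed
  have a2: "exp (real (d1+2)) = exp 1 * exp (real (d1+1))"
    by (simp add: algebra_simps flip: exp_add)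
  have b2: "real d2 * exp (real (d2+1)) \<le> real d1 * exp (real (d1+1))"
    using assms by (intro mult_mono) auto
  have c2: "real (d1+1) * exp (real (d1+2)) \<ge> real d1 * exp (real (d1+1)) + real d2 * exp (real (d2+1))"
  proof -
    have "real (d1+1) * exp (real (d1+2)) \<ge> real (d1+1) * (2 * exp (real (d1+1)))"
      unfolding a2 using e2 by (intro mult_left_mono mult_right_mono) auto
    moreover have "real (d1+1) * (2 * exp (real (d1+1))) = 2 * exp (real (d1+1)) + 2 * (real d1 * exp (real (d1+1)))"
      by (simp add: algebra_simps)
    moreover have "real d1 * exp (real (d1+1)) \<ge> 0" "exp (real (d1+1)) > 0" by auto
    ultimately show ?thesis using b2 by linarith
  qed
  have "exp (real (d2*D)) > 0" by simp
  moreover have "real (d2-1) * exp (real d2) \<ge> 0" by simp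
  ultimately show ?thesis using c c2 by linarith
qed
theorem lemma2:
  fixes V :: "'a set" and E :: "'a set set" and n d1 d2 :: nat and u u1 u2 w :: 'a
  assumes tree: "is_tree V E"
    and n: "card V = n"
    and uV: "u \<in> V"
    and umax: "\<forall>v\<in>V. degree E v \<le> degree E u"
    and u1: "adj E u u1" and u2: "adj E u u2" and u12: "u1 \<noteq> u2"
    and d1: "card (neighbours E u1 - {u}) = d1"
    and p1: "\<forall>x\<in>neighbours E u1 - {u}. pendant E x"
    and d2: "card (neighbours E u2 - {u}) = d2"
    and p2: "\<forall>x\<in>neighbours E u2 - {u}. pendant E x"
    and w: "w \<in> neighbours E u2 - {u}"
    and d12: "d1 \<ge> d2" and d2pos: "d2 \<ge> 1"
  shows "exp_M2 E < exp_M2 ((E - {{u2, w}}) \<union> {{u1, w}})"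
proof -
  have sg: "simple_graph V E" using tree unfolding is_tree_def by simp
  hence finV: "finite V" and EV: "\<forall>e\<in>E. e \<subseteq> V" and c2: "\<forall>e\<in>E. card e = 2"
    unfolding simple_graph_def by auto
  have finE: "finite E"
    by (rule finite_subset[of E "Pow V"]) (use EV finV in auto)
  have finN: "finite (neighbours E v)" for v
    by (rule finite_subset[of _ V]) (use EV finV in \<open>auto simp: neighbours_def adj_def\<close>)
  have neq: "a \<noteq> b" if "{a,b} \<in> E" for a b
    using c2 that by fastforce
  have symm: "{a,b} = {b,a}" for a b :: 'a by auto
  have uu1: "{u,u1} \<in> E" using u1 unfolding adj_def .
  have uu2: "{u,u2} \<in> E" using u2 unfolding adj_def .
  have u2w: "{u2,w} \<in> E" and wu: "w \<noteq> u" using w unfolding neighbours_def adj_def by auto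
  have nu1: "u \<noteq> u1" using neq[OF uu1] .
  have nu2: "u \<noteq> u2" using neq[OF uu2] .
  have nu2w: "u2 \<noteq> w" using neq[OF u2w] .
  have uN1: "u \<in> neighbours E u1" using uu1 by (simp add: neighbours_def adj_def symm)
  have uN2: "u \<in> neighbours E u2" using uu2 by (simp add: neighbours_def adj_def symm)
  have degu1: "degree E u1 = d1 + 1"
  proof -
    have "neighbours E u1 = insert u (neighbours E u1 - {u})" using uN1 by auto
    hence "card (neighbours E u1) = d1 + 1" using d1 finN[of u1]
      by (metis Suc_eq_plus1 card_Diff1_less_iff card_Suc_Diff1 uN1)
    thus ?thesis using deg_card[OF c2] by simp
  qed
  have degu2: "degree E u2 = d2 + 1"
  proof -
    have "card (neighbours E u2) = d2 + 1" using d2 finN[of u2]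
      by (metis Suc_eq_plus1 card_Suc_Diff1 uN2)
    thus ?thesis using deg_card[OF c2] by simp
  qed
  have pd1: "\<forall>x\<in>neighbours E u1 - {u}. degree E x = 1" using p1 unfolding pendant_def .
  have pd2: "\<forall>x\<in>neighbours E u2 - {u}. degree E x = 1" using p2 unfolding pendant_def .
  have degw: "degree E w = 1" using pd2 w by auto
  have u1nN2: "u1 \<notin> neighbours E u2 - {u}"
  proof
    assume "u1 \<in> neighbours E u2 - {u}"
    hence "degree E u1 = 1" using pd2 by blast
    thus False using degu1 d12 d2pos by simp
  qed
  have u2nN1: "u2 \<notin> neighbours E u1 - {u}"
  proof
    assume "u2 \<in> neighbours E u1 - {u}"
    hence "degree E u2 = 1" using pd1 by blast
    thus False using degu2 d2pos by simp
  qed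
  have no12: "\<forall>e\<in>E. \<not> (u1 \<in> e \<and> u2 \<in> e)"
  proof (intro ballI notI)
    fix e assume e: "e \<in> E" "u1 \<in> e \<and> u2 \<in> e"
    have "card e = 2" using c2 e by blast
    then obtain x where "x \<noteq> u1" "e = {u1, x}" using edge_form[of e u1] e by blast
    hence "e = {u1,u2}" using e u12 by auto
    hence "u2 \<in> neighbours E u1" using e by (simp add: neighbours_def adj_def)
    thus False using u2nN1 nu2 by auto
  qed
  have wu1: "w \<noteq> u1" using degw degu1 d12 d2pos by auto
  have u1wE: "{u1,w} \<notin> E"
  proof
    assume "{u1,w} \<in> E"
    hence "{u1,u2} \<subseteq> neighbours E w" using u2w by (auto simp: neighbours_def adj_def symm)
    hence "card {u1,u2} \<le> card (neighbours E w)" using finN by (rule card_mono[rotated])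
    thus False using degw deg_card[OF c2, of w] u12 by simp
  qed
  define E' where "E' = (E - {{u2, w}}) \<union> {{u1, w}}"
  have finE': "finite E'" using finE unfolding E'_def by simp
  have c2': "\<forall>e\<in>E'. card e = 2" using c2 wu1 unfolding E'_def by auto
  have N'u1: "neighbours E' u1 = insert w (neighbours E u1)"
    using u12 wu1 unfolding E'_def neighbours_def adj_def by (auto simp: doubleton_eq_iff)
  have N'u2: "neighbours E' u2 = neighbours E u2 - {w}"
    using u12 nu2w unfolding E'_def neighbours_def adj_def by (auto simp: doubleton_eq_iff)
  have N'y: "neighbours E' y = neighbours E y" if "y \<noteq> u1" "y \<noteq> u2" "y \<noteq> w" for y
    using that unfolding E'_def neighbours_def adj_def by (auto simp: doubleton_eq_iff)
  have N'w: "neighbours E' w = insert u1 (neighbours E w - {u2})"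
    using u12 wu1 nu2w unfolding E'_def neighbours_def adj_def by (auto simp: doubleton_eq_iff)
  have wnN1: "w \<notin> neighbours E u1" using u1wE by (simp add: neighbours_def adj_def)
  have u1nNw: "u1 \<notin> neighbours E w" using u1wE by (simp add: neighbours_def adj_def symm)
  have u2Nw: "u2 \<in> neighbours E w" using u2w by (simp add: neighbours_def adj_def symm)
  have wN2: "w \<in> neighbours E u2" using w by simp
  have deg'u1: "degree E' u1 = d1 + 2"
    using deg_card[OF c2', of u1] N'u1 wnN1 finN[of u1] deg_card[OF c2, of u1] degu1 by simp
  have deg'u2: "degree E' u2 = d2"
    using deg_card[OF c2', of u2] N'u2 wN2 finN[of u2] deg_card[OF c2, of u2] degu2 by simp
  have deg'w: "degree E' w = degree E w"
  proof -
    have "card (neighbours E' w) = card (neighbours E w)"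
      unfolding N'w using u1nNw u2Nw finN[of w] card_Suc_Diff1[OF finN u2Nw]
      by simp
    thus ?thesis using deg_card[OF c2', of w] deg_card[OF c2, of w] by simp
  qed
  have deg'y: "degree E' y = degree E y" if "y \<noteq> u1" "y \<noteq> u2" for y
  proof (cases "y = w")
    case True thus ?thesis using deg'w by simp
  next
    case False thus ?thesis using that N'y deg_card[OF c2', of y] deg_card[OF c2, of y] by simp
  qed
  have no12': "\<forall>e\<in>E'. \<not> (u1 \<in> e \<and> u2 \<in> e)"
    using no12 u12 nu2w unfolding E'_def by auto
  define f where "f G e = exp (real (\<Prod>y\<in>e. degree G y))" for G :: "'a set set" and e
  have B: "{e\<in>E'. u1 \<notin> e \<and> u2 \<notin> e} = {e\<in>E. u1 \<notin> e \<and> u2 \<notin> e}"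
    unfolding E'_def by auto
  have SB: "sum (f E') {e\<in>E'. u1 \<notin> e \<and> u2 \<notin> e} = sum (f E) {e\<in>E. u1 \<notin> e \<and> u2 \<notin> e}"
    unfolding B f_def
    by (intro sum.cong refl arg_cong[where f="\<lambda>x. exp (real x)"] prod.cong) (auto intro: deg'y)
  define D where "D = degree E u"
  have deg'u: "degree E' u = D" unfolding D_def using deg'y nu1 nu2 by simp
  have u1V: "u1 \<in> V" using EV uu1 by auto
  have Dge: "D \<ge> d1 + 1" using umax u1V degu1 unfolding D_def by auto
  have s1: "sum (f E) {e\<in>E. u1 \<in> e} = exp (real ((d1+1)*D)) + real d1 * exp (real (d1+1))"
    unfolding f_def using star_sum[OF finE c2, of u1 u] uu1 pd1 degu1 D_def by (simp add: symm)
  have s2: "sum (f E) {e\<in>E. u2 \<in> e} = exp (real ((d2+1)*D)) + real d2 * exp (real (d2+1))"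
    unfolding f_def using star_sum[OF finE c2, of u2 u] uu2 pd2 degu2 D_def by (simp add: symm)
  have pd1': "\<forall>x\<in>neighbours E' u1 - {u}. degree E' x = 1"
  proof
    fix x assume x: "x \<in> neighbours E' u1 - {u}"
    show "degree E' x = 1"
    proof (cases "x = w")
      case True thus ?thesis using deg'w degw by simp
    next
      case False
      hence xn: "x \<in> neighbours E u1 - {u}" using x N'u1 by auto
      have "x \<noteq> u1" using xn not_self_nb[OF c2] by auto
      moreover have "x \<noteq> u2" using xn u2nN1 by auto
      ultimately show ?thesis using deg'y pd1 xn by simp
    qed
  qed
  have pd2': "\<forall>x\<in>neighbours E' u2 - {u}. degree E' x = 1"
  proof
    fix x assume x: "x \<in> neighbours E' u2 - {u}"
    hence xn: "x \<in> neighbours E u2 - {u}" using N'u2 by auto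
    have "x \<noteq> u2" using xn not_self_nb[OF c2] by auto
    moreover have "x \<noteq> u1" using xn u1nN2 by auto
    ultimately show "degree E' x = 1" using deg'y pd2 xn by simp
  qed
  have uu1': "{u1,u} \<in> E'" using uu1 u12 nu2 unfolding E'_def by (auto simp: symm doubleton_eq_iff)
  have uu2': "{u2,u} \<in> E'" using uu2 wu nu2 unfolding E'_def by (auto simp: symm doubleton_eq_iff)
  have s1': "sum (f E') {e\<in>E'. u1 \<in> e} = exp (real ((d1+2)*D)) + real (d1+1) * exp (real (d1+2))"
    unfolding f_def using star_sum[OF finE' c2' uu1' pd1'] deg'u1 deg'u by simp
  have s2': "sum (f E') {e\<in>E'. u2 \<in> e} = exp (real (d2*D)) + real (d2-1) * exp (real d2)"
    unfolding f_def using star_sum[OF finE' c2' uu2' pd2'] deg'u2 deg'u by simp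
  have eE: "exp_M2 E = sum (f E) {e\<in>E. u1 \<notin> e \<and> u2 \<notin> e} + sum (f E) {e\<in>E. u1 \<in> e} + sum (f E) {e\<in>E. u2 \<in> e}"
    unfolding exp_M2_def using split3[OF finE no12, of "f E"] unfolding f_def .
  have eE': "exp_M2 E' = sum (f E') {e\<in>E'. u1 \<notin> e \<and> u2 \<notin> e} + sum (f E') {e\<in>E'. u1 \<in> e} + sum (f E') {e\<in>E'. u2 \<in> e}"
    unfolding exp_M2_def using split3[OF finE' no12', of "f E'"] unfolding f_def .
  have "exp_M2 E < exp_M2 E'"
    unfolding eE eE' SB s1 s2 s1' s2' using final_ineq[OF Dge d12 d2pos] by linarith
  thus ?thesis unfolding E'_def .
qed

end
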